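(* Assume the Setup below (with $G$ possibly different from $G_\circ$), that $G_\circ$ is a dynamic causal graph for $(Y_1,Y_0)$ given $\mathscr G_\circ$, that $v^2>0$ almost surely, that the Unconfoundedness Condition (A) holds, and that the Nonnegative Spillover Condition holds. Then $D\ge C_G$ almost surely.
   Context: Setup. $N$ is a finite set of units, $n=|N|$. For $i\in N$ and $t\in\{0,1\}$, $Y_{i,t}\in\{0,1\}$ are binary outcomes; $Y_1=(Y_{i,1})_{i\in N}$, $Y_0=(Y_{j,0})_{j\in N}$, and for $A\subset N$, $Y_{A,t}=(Y_{i,t})_{i\in A}$. $G_\circ=(N,E_\circ)$ is a (possibly latent) directed graph with $E_\circ\subset\{ij:i,j\in N,i\neq j\}$ (an edge $ij$ means $Y_{j,0}$ causally affects $Y_{i,1}$); $G=(N,E_G)$ is an observed directed graph with $E_G\subset\{ij:i\ne j\}$. Write $N_\circ(i)=\{j:ij\in E_\circ\}$, $\overline N_\circ(i)=N_\circ(i)\cup\{i\}$, $N_\circ(A)=\bigcup_{i\in A}N_\circ(i)$, $\overline N_\circ(A)=N_\circ(A)\cup A$, $d_\circ(i)=|N_\circ(i)|$, and similarly $N_G(i)=\{j:ij\in E_G\}$, $\overline N_G(i)=N_G(i)\cup\{i\}$. $X=(X_i)_{i\in N}$, $X_i\in\mathbb R^p$, are observed covariates. $\mathscr G=\sigma(X,G)$ and $\mathscr G_\circ=\sigma(X,G,G_\circ)$; $\mathbf E_{\mathscr H},\mathrm{Var}_{\mathscr H},\mathrm{Cov}_{\mathscr H}$ denote conditional expectation/variance/covariance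 given a $\sigma$-field $\mathscr H$. Dynamic causal graph: $G_\circ$ is a dynamic causal graph for $(Y_1,Y_0)$ given $\mathscr G_\circ$ if for any pairwise disjoint $A,B,A',B'\subset N$ with $(\overline N_\circ(A)\cup B)\cap(\overline N_\circ(A')\cup B')=\varnothing$, the vectors $(Y_{A,1},Y_{B\cup\overline N_\circ(A),0})$ and $(Y_{A',1},Y_{B'\cup\overline N_\circ(A'),0})$ are conditionally independent given $\mathscr G_\circ$. Potential outcomes: for each $i$, writing $N_\circ(i)=\{j_1,\dots,j_{d_\circ(i)}\}$, there is a map $\rho_i(\cdot;U_{i,1}):\{0,1\}^{d_\circ(i)+1}\to\{0,1\}$ with $U_{i,1}$ a random vector, and $Y_{i,1}=\rho_i(Y_{i,0},Y_{j_1,0},\dots,Y_{j_{d_\circ(i)},0};U_{i,1})$. For $j_k\in N_\circ(i)$ and $d\in\{0,1\}$, $Y^*_{ij_k}(d)=\rho_i(Y_{i,0},Y_{j_1,0},\dots,Y_{j_{k-1},0},d,Y_{j_{k+1},0},\dots,Y_{j_{d_\circ(i)},0};U_{i,1})$. Parameters: $\mu_{j,0}=\mathbf E_{\mathscr G_\circ}[Y_{j,0}]$, $v^2=\frac1n\sum_{j\in N}\mu_{j,0}(1-\mu_{j,0})$, $w_j=\mu_{j,0}(1-\mu_{j,0})/\sum_{\ell\in N}\mu_{\ell,0}(1-\mu_{\ell,0})$. $\tau_j=\sum_{i:ij\in E_\circ}\mathbf E_{\mathscr G_\circ}[Y^*_{ij}(1)-Y^*_{ij}(0)]$ and $D=\sum_{j\in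 N}w_j\tau_j$. $C_G=\frac{1}{nv^2}\sum_{i\in N}\sum_{j:ij\in E_G}\mathrm{Cov}_{\mathscr G_\circ}(Y_{i,1},Y_{j,0})$. Unconfoundedness Condition (A): for each $ij\in E_\circ$, $(Y^*_{ij}(1),Y^*_{ij}(0),G_\circ)$ is conditionally independent of $Y_{j,0}$ given $\mathscr G$. Nonnegative Spillover Condition: for each $j\in N$, $P\big\{\sum_{i\in N:\,ij\in E_\circ\setminus E_G}(Y^*_{ij}(1)-Y^*_{ij}(0))\ge 0\big\}=1$. *)

theory Defs
  imports "HOL-Probability.Probability"
begin

(* An edge ij is the pair (i,j); (i,j) \<in> E means Y_{j,0} may affect Y_{i,1}. *)

definition nbh :: "('a \<times> 'a) set \<Rightarrow> 'a \<Rightarrow> 'a set" where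
  "nbh E i = {j. (i, j) \<in> E}"

definition nbh_set_bar :: "('a \<times> 'a) set \<Rightarrow> 'a set \<Rightarrow> 'a set" where
  "nbh_set_bar E A = (\<Union>i\<in>A. nbh E i) \<union> A"

definition sigma_XG :: "'w measure \<Rightarrow> 'a set \<Rightarrow> ('a \<Rightarrow> 'w \<Rightarrow> real ^ 'p)
    \<Rightarrow> ('w \<Rightarrow> ('a \<times> 'a) set) \<Rightarrow> 'w measure" where
  "sigma_XG M N X EG = vimage_algebra (space M) (\<lambda>w. ((\<lambda>i\<in>N. X i w), EG w))
      ((\<Pi>\<^sub>M i\<in>N. borel) \<Otimes>\<^sub>M count_space UNIV)"

definition sigma_XGG :: "'w measure \<Rightarrow> 'a set \<Rightarrow> ('a \<Rightarrow> 'w \<Rightarrow> real ^ 'p)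
    \<Rightarrow> ('w \<Rightarrow> ('a \<times> 'a) set) \<Rightarrow> ('w \<Rightarrow> ('a \<times> 'a) set) \<Rightarrow> 'w measure" where
  "sigma_XGG M N X EG E0 = vimage_algebra (space M) (\<lambda>w. (((\<lambda>i\<in>N. X i w), EG w), E0 w))
      (((\<Pi>\<^sub>M i\<in>N. borel) \<Otimes>\<^sub>M count_space UNIV) \<Otimes>\<^sub>M count_space UNIV)"

definition cond_cov :: "'w measure \<Rightarrow> 'w measure \<Rightarrow> ('w \<Rightarrow> real) \<Rightarrow> ('w \<Rightarrow> real) \<Rightarrow> 'w \<Rightarrow> real" where
  "cond_cov M F f g w = real_cond_exp M F (\<lambda>x. f x * g x) w
      - real_cond_exp M F f w * real_cond_exp M F g w"

definition cond_indep_on :: "'w measure \<Rightarrow> 'w measure \<Rightarrow> ('w \<Rightarrow> bool) \<Rightarrow> ('w \<Rightarrow> 'u) \<Rightarrow> ('w \<Rightarrow> 'v) \<Rightarrow> bool" where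
  "cond_indep_on M F P U V \<longleftrightarrow> (\<forall>S T. AE w in M. P w \<longrightarrow>
      real_cond_exp M F (\<lambda>x. indicator S (U x) * indicator T (V x)) w
      = real_cond_exp M F (\<lambda>x. indicator S (U x)) w * real_cond_exp M F (\<lambda>x. indicator T (V x)) w)"

definition cond_indep :: "'w measure \<Rightarrow> 'w measure \<Rightarrow> ('w \<Rightarrow> 'u) \<Rightarrow> ('w \<Rightarrow> 'v) \<Rightarrow> bool" where
  "cond_indep M F U V \<longleftrightarrow> cond_indep_on M F (\<lambda>_. True) U V"

definition dynamic_causal_graph :: "'w measure \<Rightarrow> 'w measure \<Rightarrow> 'a set \<Rightarrow> ('w \<Rightarrow> ('a \<times> 'a) set)
    \<Rightarrow> ('a \<Rightarrow> 'w \<Rightarrow> bool) \<Rightarrow> ('a \<Rightarrow> 'w \<Rightarrow> bool) \<Rightarrow> bool" where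
  "dynamic_causal_graph M F0 N E0 Y1 Y0 \<longleftrightarrow>
    (\<forall>A B A' B' e. A \<subseteq> N \<and> B \<subseteq> N \<and> A' \<subseteq> N \<and> B' \<subseteq> N \<and>
       A \<inter> B = {} \<and> A \<inter> A' = {} \<and> A \<inter> B' = {} \<and> B \<inter> A' = {} \<and> B \<inter> B' = {} \<and> A' \<inter> B' = {} \<and>
       (nbh_set_bar e A \<union> B) \<inter> (nbh_set_bar e A' \<union> B') = {} \<longrightarrow>
       cond_indep_on M F0 (\<lambda>w. E0 w = e)
         (\<lambda>w. (restrict (\<lambda>k. Y1 k w) A, restrict (\<lambda>k. Y0 k w) (B \<union> nbh_set_bar e A)))
         (\<lambda>w. (restrict (\<lambda>k. Y1 k w) A', restrict (\<lambda>k. Y0 k w) (B' \<union> nbh_set_bar e A'))))"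

(* Potential outcome Y*_{ij}(d): rho i y w is the period-1 outcome of unit i when the period-0
   outcome vector is y (rho i \<cdot> w plays the role of rho_i(\<cdot>; U_{i,1})). *)
definition pot_out :: "('a \<Rightarrow> ('a \<Rightarrow> bool) \<Rightarrow> 'w \<Rightarrow> bool) \<Rightarrow> ('a \<Rightarrow> 'w \<Rightarrow> bool)
    \<Rightarrow> 'a \<Rightarrow> 'a \<Rightarrow> bool \<Rightarrow> 'w \<Rightarrow> bool" where
  "pot_out rho Y0 i j d w = rho i ((\<lambda>k. Y0 k w)(j := d)) w"

end

theory Submission
  imports Defs
begin

lemma alg_final:
  fixes N :: "'a set" and m :: "'a \<Rightarrow> real" and d c :: "'a \<Rightarrow> 'a \<Rightarrow> real"
    and E0 EG :: "('a \<times> 'a) set"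
  assumes fin: "finite N" and Spos: "(\<Sum>l\<in>N. m l) > 0"
    and hc: "\<And>i j. i \<in> N \<Longrightarrow> j \<in> N \<Longrightarrow> (i, j) \<in> EG \<Longrightarrow> c i j = (if (i, j) \<in> E0 then m j * d i j else 0)"
    and hm: "\<And>j. j \<in> N \<Longrightarrow> m j \<ge> 0"
    and hs: "\<And>j. j \<in> N \<Longrightarrow> 0 \<le> (\<Sum>i\<in>{i\<in>N. (i, j) \<in> E0 - EG}. d i j)"
  shows "(1 / (\<Sum>l\<in>N. m l)) * (\<Sum>i\<in>N. \<Sum>j\<in>{j\<in>N. (i, j) \<in> EG}. c i j)
     \<le> (\<Sum>j\<in>N. m j / (\<Sum>l\<in>N. m l) * (\<Sum>i\<in>{i\<in>N. (i, j) \<in> E0}. d i j))"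
proof -
  define S where "S = (\<Sum>l\<in>N. m l)"
  have "(\<Sum>i\<in>N. \<Sum>j\<in>{j\<in>N. (i, j) \<in> EG}. c i j) = (\<Sum>i\<in>N. \<Sum>j\<in>{j\<in>N. (i, j) \<in> EG}. (if (i, j) \<in> E0 then m j * d i j else 0))"
    by (intro sum.cong refl) (auto simp: hc)
  also have "\<dots> = (\<Sum>j\<in>N. \<Sum>i\<in>{i\<in>N. (i, j) \<in> EG}. (if (i, j) \<in> E0 then m j * d i j else 0))"
    using sum.swap_restrict[OF fin fin] by simp
  also have "\<dots> = (\<Sum>j\<in>N. m j * (\<Sum>i\<in>{i\<in>N. (i, j) \<in> E0 \<inter> EG}. d i j))"
    using fin by (intro sum.cong refl) (simp add: sum.inter_filter sum_distrib_left if_distrib[where f="\<lambda>x. _ * x"] conj_commute cong: if_cong; intro sum.cong; auto)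
  finally have L: "(\<Sum>i\<in>N. \<Sum>j\<in>{j\<in>N. (i, j) \<in> EG}. c i j) = (\<Sum>j\<in>N. m j * (\<Sum>i\<in>{i\<in>N. (i, j) \<in> E0 \<inter> EG}. d i j))" .
  have split: "(\<Sum>i\<in>{i\<in>N. (i, j) \<in> E0}. d i j) = (\<Sum>i\<in>{i\<in>N. (i, j) \<in> E0 \<inter> EG}. d i j) + (\<Sum>i\<in>{i\<in>N. (i, j) \<in> E0 - EG}. d i j)" for j
  proof -
    have "{i\<in>N. (i, j) \<in> E0} = {i\<in>N. (i, j) \<in> E0 \<inter> EG} \<union> {i\<in>N. (i, j) \<in> E0 - EG}" by auto
    then show ?thesis using fin by (simp add: sum.union_disjoint[symmetric]; subst sum.union_disjoint) auto
  qed
  have "(\<Sum>j\<in>N. m j / S * (\<Sum>i\<in>{i\<in>N. (i, j) \<in> E0}. d i j))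
      = (1 / S) * (\<Sum>j\<in>N. m j * (\<Sum>i\<in>{i\<in>N. (i, j) \<in> E0 \<inter> EG}. d i j)) + (1/S) * (\<Sum>j\<in>N. m j * (\<Sum>i\<in>{i\<in>N. (i, j) \<in> E0 - EG}. d i j))"
    by (simp add: split sum_distrib_left algebra_simps sum.distrib)
  moreover have "0 \<le> (1/S) * (\<Sum>j\<in>N. m j * (\<Sum>i\<in>{i\<in>N. (i, j) \<in> E0 - EG}. d i j))"
    using Spos hm hs unfolding S_def by (intro mult_nonneg_nonneg[OF _ sum_nonneg] mult_nonneg_nonneg) auto
  ultimately show ?thesis using L unfolding S_def by simp
qed

theorem lemma2:
  fixes M :: "'w measure" and N :: "'a set"
    and X :: "'a \<Rightarrow> 'w \<Rightarrow> real ^ 'p"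
    and EG E0 :: "'w \<Rightarrow> ('a \<times> 'a) set"
    and Y1 Y0 :: "'a \<Rightarrow> 'w \<Rightarrow> bool"
    and rho :: "'a \<Rightarrow> ('a \<Rightarrow> bool) \<Rightarrow> 'w \<Rightarrow> bool"
  defines "F \<equiv> sigma_XG M N X EG"
    and "F0 \<equiv> sigma_XGG M N X EG E0"
    and "Ystar \<equiv> pot_out rho Y0"
  defines "mu \<equiv> (\<lambda>j w. real_cond_exp M F0 (\<lambda>x. of_bool (Y0 j x)) w)"
  defines "v2 \<equiv> (\<lambda>w. (1 / real (card N)) * (\<Sum>j\<in>N. mu j w * (1 - mu j w)))"
  defines "wt \<equiv> (\<lambda>j w. mu j w * (1 - mu j w) / (\<Sum>l\<in>N. mu l w * (1 - mu l w)))"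
  defines "tau \<equiv> (\<lambda>j w. \<Sum>i\<in>{i\<in>N. (i, j) \<in> E0 w}.
              real_cond_exp M F0 (\<lambda>x. of_bool (Ystar i j True x) - of_bool (Ystar i j False x)) w)"
  defines "D \<equiv> (\<lambda>w. \<Sum>j\<in>N. wt j w * tau j w)"
  defines "CG \<equiv> (\<lambda>w. (1 / (real (card N) * v2 w)) *
              (\<Sum>i\<in>N. \<Sum>j\<in>{j\<in>N. (i, j) \<in> EG w}.
                 cond_cov M F0 (\<lambda>x. of_bool (Y1 i x)) (\<lambda>x. of_bool (Y0 j x)) w))"
  assumes prob: "prob_space M"
    and finN: "finite N"
    and X_meas: "\<And>i. i \<in> N \<Longrightarrow> X i \<in> borel_measurable M"
    and EG_meas: "EG \<in> measurable M (count_space UNIV)"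
    and E0_meas: "E0 \<in> measurable M (count_space UNIV)"
    and Y1_meas: "\<And>i. i \<in> N \<Longrightarrow> Y1 i \<in> measurable M (count_space UNIV)"
    and Y0_meas: "\<And>j. j \<in> N \<Longrightarrow> Y0 j \<in> measurable M (count_space UNIV)"
    and Ystar_meas: "\<And>i j d. i \<in> N \<Longrightarrow> j \<in> N \<Longrightarrow> Ystar i j d \<in> measurable M (count_space UNIV)"
    and EG_edges: "\<And>w. w \<in> space M \<Longrightarrow> EG w \<subseteq> {(i, j). i \<in> N \<and> j \<in> N \<and> i \<noteq> j}"
    and E0_edges: "\<And>w. w \<in> space M \<Longrightarrow> E0 w \<subseteq> {(i, j). i \<in> N \<and> j \<in> N \<and> i \<noteq> j}"
    and rho_local: "\<And>i y y' w. i \<in> N \<Longrightarrow> w \<in> space M \<Longrightarrow>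
        (\<forall>k\<in>nbh_set_bar (E0 w) {i}. y k = y' k) \<Longrightarrow> rho i y w = rho i y' w"
    and Y1_rho: "\<And>i w. i \<in> N \<Longrightarrow> w \<in> space M \<Longrightarrow> Y1 i w = rho i (\<lambda>k. Y0 k w) w"
    and DCG: "dynamic_causal_graph M F0 N E0 Y1 Y0"
    and v2_pos: "AE w in M. v2 w > 0"
    and unconf: "\<And>i j. i \<in> N \<Longrightarrow> j \<in> N \<Longrightarrow>
        cond_indep M F
          (\<lambda>w. if (i, j) \<in> E0 w then Some (Ystar i j True w, Ystar i j False w, E0 w) else None)
          (Y0 j)"
    and nonneg_spill: "\<And>j. j \<in> N \<Longrightarrow>
        AE w in M. 0 \<le> (\<Sum>i\<in>{i\<in>N. (i, j) \<in> E0 w - EG w}.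
                          of_bool (Ystar i j True w) - of_bool (Ystar i j False w) :: real)"
  shows "AE w in M. D w \<ge> CG w"
proof -
  interpret P: prob_space M by (rule prob)
  define XN where "XN = (\<lambda>w. (\<lambda>i\<in>N. X i w))"
  have mXN: "XN \<in> measurable M (\<Pi>\<^sub>M i\<in>N. borel)" unfolding XN_def
    by (rule measurable_restrict) (rule X_meas)
  have mF: "(\<lambda>w. (XN w, EG w)) \<in> measurable M ((\<Pi>\<^sub>M i\<in>N. borel) \<Otimes>\<^sub>M count_space UNIV)"
    using mXN EG_meas by (rule measurable_Pair)
  have mF0: "(\<lambda>w. ((XN w, EG w), E0 w)) \<in> measurable M (((\<Pi>\<^sub>M i\<in>N. borel) \<Otimes>\<^sub>M count_space UNIV) \<Otimes>\<^sub>M count_space UNIV)"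
    using mF E0_meas by (rule measurable_Pair)
  have F_eq: "F = vimage_algebra (space M) (\<lambda>w. (XN w, EG w)) ((\<Pi>\<^sub>M i\<in>N. borel) \<Otimes>\<^sub>M count_space UNIV)"
    unfolding F_def sigma_XG_def XN_def ..
  have F0_eq: "F0 = vimage_algebra (space M) (\<lambda>w. ((XN w, EG w), E0 w)) (((\<Pi>\<^sub>M i\<in>N. borel) \<Otimes>\<^sub>M count_space UNIV) \<Otimes>\<^sub>M count_space UNIV)"
    unfolding F0_def sigma_XGG_def XN_def ..
  have sF: "sets F = {(\<lambda>w. (XN w, EG w)) -` A \<inter> space M | A. A \<in> sets ((\<Pi>\<^sub>M i\<in>N. borel) \<Otimes>\<^sub>M count_space UNIV)}"
    unfolding F_eq by (rule sets_vimage_algebra2) (use mF in \<open>simp add: measurable_def\<close>)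
  have sF0: "sets F0 = {(\<lambda>w. ((XN w, EG w), E0 w)) -` A \<inter> space M | A. A \<in> sets (((\<Pi>\<^sub>M i\<in>N. borel) \<Otimes>\<^sub>M count_space UNIV) \<Otimes>\<^sub>M count_space UNIV)}"
    unfolding F0_eq by (rule sets_vimage_algebra2) (use mF0 in \<open>simp add: measurable_def\<close>)
  have spF: "space F = space M" unfolding F_eq by simp
  have spF0: "space F0 = space M" unfolding F0_eq by simp
  have subF: "subalgebra M F" unfolding subalgebra_def using spF sF measurable_sets[OF mF] by auto
  have subF0: "subalgebra M F0" unfolding subalgebra_def using spF0 sF0 measurable_sets[OF mF0] by auto
  interpret SF: finite_measure_subalgebra M F by unfold_locales (rule subF)
  interpret SF0: finite_measure_subalgebra M F0 by unfold_locales (rule subF0)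
  have mF0': "(\<lambda>w. ((XN w, EG w), E0 w)) \<in> measurable F0 (((\<Pi>\<^sub>M i\<in>N. borel) \<Otimes>\<^sub>M count_space UNIV) \<Otimes>\<^sub>M count_space UNIV)"
    unfolding F0_eq by (rule measurable_vimage_algebra1) (use mF0 in \<open>simp add: measurable_def\<close>)
  have mF_F0: "(\<lambda>w. (XN w, EG w)) \<in> measurable F0 ((\<Pi>\<^sub>M i\<in>N. borel) \<Otimes>\<^sub>M count_space UNIV)"
    using measurable_compose[OF mF0' measurable_fst] by simp
  have E0_F0: "E0 \<in> measurable F0 (count_space UNIV)"
    using measurable_compose[OF mF0' measurable_snd] by simp
  have EG_F0: "EG \<in> measurable F0 (count_space UNIV)"
    using measurable_compose[OF mF_F0 measurable_snd] by simp
  have FsubF0: "sets F \<subseteq> sets F0"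
  proof
    fix A assume "A \<in> sets F"
    then obtain C where C: "C \<in> sets ((\<Pi>\<^sub>M i\<in>N. borel) \<Otimes>\<^sub>M count_space UNIV)" "A = (\<lambda>w. (XN w, EG w)) -` C \<inter> space M"
      using sF by auto
    show "A \<in> sets F0" using measurable_sets[OF mF_F0 C(1)] C(2) spF0 by simp
  qed
  have subF0F: "subalgebra F0 F" unfolding subalgebra_def using FsubF0 spF spF0 by simp
  define U where "U i j w = (if (i, j) \<in> E0 w then Some (Ystar i j True w, Ystar i j False w, E0 w) else None)" for i j w
  define Yr where "Yr j x = (of_bool (Y0 j x) :: real)" for j x
  have E0_pred: "Measurable.pred M (\<lambda>w. (i, j) \<in> E0 w)" for i j
    using measurable_compose[OF E0_meas, of "\<lambda>e. (i, j) \<in> e" "count_space UNIV"] by (simp add: pred_def)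
  have mU: "U i j \<in> measurable M (count_space UNIV)" if "i \<in> N" "j \<in> N" for i j
  proof -
    have pT: "Measurable.pred M (Ystar i j d)" for d by (rule Ystar_meas[OF that])
    define h where "h (a::bool) (b::bool) e = (if (i, j) \<in> e then Some (a, b, e) else None)" for a b e
    have "U i j = (\<lambda>w. if Ystar i j True w then (if Ystar i j False w then h True True (E0 w) else h True False (E0 w))
                     else (if Ystar i j False w then h False True (E0 w) else h False False (E0 w)))"
      by (auto simp: fun_eq_iff U_def h_def)
    also have "\<dots> \<in> measurable M (count_space UNIV)"
      using pT by (intro measurable_If measurable_compose[OF E0_meas]) auto
    finally show ?thesis .
  qed
  have mI: "(\<lambda>x. indicator S (U i j x) :: real) \<in> borel_measurable M" if "i \<in> N" "j \<in> N" for i j S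
    using measurable_compose[OF mU[OF that] borel_measurable_count_space] .
  have Yr_meas: "Yr j \<in> borel_measurable M" if "j \<in> N" for j
    using measurable_compose[OF Y0_meas[OF that] borel_measurable_count_space, of "of_bool"] unfolding Yr_def[abs_def] .
  have bnd_int: "integrable M f" if "f \<in> borel_measurable M" "\<And>x. x \<in> space M \<Longrightarrow> \<bar>f x\<bar> \<le> 1" for f :: "'w \<Rightarrow> real"
    using P.integrable_const_bound[of f 1] that by auto
  have ce_bnd: "AE x in M. \<bar>real_cond_exp M G f x\<bar> \<le> 1"
    if "sigma_finite_subalgebra M G" "f \<in> borel_measurable M" "\<And>x. x \<in> space M \<Longrightarrow> 0 \<le> f x \<and> f x \<le> 1" for G f
  proof -
    interpret G: sigma_finite_subalgebra M G by (rule that(1))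
    have fi: "integrable M f" using that by (intro bnd_int) auto
    have "AE x in M. real_cond_exp M G f x \<ge> 0" using that by (intro G.real_cond_exp_ge_c fi) auto
    moreover have "AE x in M. real_cond_exp M G f x \<le> 1" using that by (intro G.real_cond_exp_le_c fi) auto
    ultimately show ?thesis by eventually_elim auto
  qed
  have key: "AE w in M. real_cond_exp M F0 (\<lambda>x. Yr j x * indicator S (U i j x)) w
      = real_cond_exp M F (Yr j) w * real_cond_exp M F0 (\<lambda>x. indicator S (U i j x)) w"
    if ij: "i \<in> N" "j \<in> N" and S: "S \<subseteq> range Some" for i j S
  proof -
    define g where "g = real_cond_exp M F (Yr j)"
    define I where "I x = (indicator S (U i j x) :: real)" for x
    have gF: "g \<in> borel_measurable F" unfolding g_def by simp
    have gF0: "g \<in> borel_measurable F0" using measurable_from_subalg[OF subF0F gF] .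
    have gM: "g \<in> borel_measurable M" by (simp add: g_def)
    have Yr_int: "integrable M (Yr j)" using Yr_meas[OF ij(2)] by (intro bnd_int) (auto simp: Yr_def)
    have g_int: "integrable M g" unfolding g_def by (rule SF.real_cond_exp_int(1)[OF Yr_int])
    have g_bnd: "AE x in M. \<bar>g x\<bar> \<le> 1" unfolding g_def
      by (rule ce_bnd) (auto simp: Yr_meas ij Yr_def SF.sigma_finite_subalgebra_axioms)
    have IM: "I \<in> borel_measurable M" unfolding I_def by (rule mI[OF ij])
    have cI: "real_cond_exp M F0 I \<in> borel_measurable F0" by simp
    have cI_bnd: "AE x in M. \<bar>real_cond_exp M F0 I x\<bar> \<le> 1"
      by (rule ce_bnd) (auto simp: IM I_def SF0.sigma_finite_subalgebra_axioms)
    show ?thesis unfolding I_def[symmetric] g_def[symmetric]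
    proof (rule SF0.real_cond_exp_charact)
      show "integrable M (\<lambda>x. Yr j x * I x)"
        by (rule bnd_int[OF borel_measurable_times[OF Yr_meas[OF ij(2)] IM]]) (auto simp: Yr_def I_def indicator_def)
      show "integrable M (\<lambda>x. g x * real_cond_exp M F0 I x)"
        by (rule Bochner_Integration.integrable_bound[OF g_int]) (use gM cI_bnd measurable_from_subalg[OF subF0 cI] in \<open>auto elim!: eventually_mono simp: abs_mult intro: mult_left_le\<close>)
      show "(\<lambda>x. g x * real_cond_exp M F0 I x) \<in> borel_measurable F0"
        using gF0 cI by (rule borel_measurable_times)
      fix B assume B: "B \<in> sets F0"
      obtain C where C: "C \<in> sets (((\<Pi>\<^sub>M i\<in>N. borel) \<Otimes>\<^sub>M count_space UNIV) \<Otimes>\<^sub>M count_space UNIV)"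
        "B = (\<lambda>w. ((XN w, EG w), E0 w)) -` C \<inter> space M" using B sF0 by auto
      define Be where "Be e = (\<lambda>w. ((XN w, EG w), e)) -` C \<inter> space M" for e
      define Se where "Se e = {u \<in> S. \<exists>a b. u = Some (a, b, e)}" for e
      define J where "J e x = (indicator (Se e) (U i j x) :: real)" for e x
      have BeF: "Be e \<in> sets F" for e
      proof -
        have m1: "(\<lambda>w. (XN w, EG w)) \<in> measurable F ((\<Pi>\<^sub>M i\<in>N. borel) \<Otimes>\<^sub>M count_space UNIV)"
          unfolding F_eq by (rule measurable_vimage_algebra1) (use mF in \<open>simp add: measurable_def\<close>)
        have "(\<lambda>w. ((XN w, EG w), e)) \<in> measurable F (((\<Pi>\<^sub>M i\<in>N. borel) \<Otimes>\<^sub>M count_space UNIV) \<Otimes>\<^sub>M count_space UNIV)"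
          using m1 by (rule measurable_Pair) simp
        from measurable_sets[OF this C(1)] show ?thesis unfolding Be_def spF .
      qed
      have BeM: "Be e \<in> sets M" for e using BeF[of e] subF unfolding subalgebra_def by auto
      have JM: "J e \<in> borel_measurable M" for e unfolding J_def by (rule mI[OF ij])
      have decomp: "indicator B w * I w = (\<Sum>e\<in>Pow (N \<times> N). indicator (Be e) w * J e w)" if w: "w \<in> space M" for w
      proof -
        have e0: "E0 w \<in> Pow (N \<times> N)" using E0_edges[OF w] by auto
        have "(\<Sum>e\<in>Pow (N \<times> N). indicator (Be e) w * J e w)
            = (\<Sum>e\<in>Pow (N \<times> N). if e = E0 w then indicator (Be (E0 w)) w * J (E0 w) w else 0)"
          by (intro sum.cong refl) (auto simp: J_def Se_def U_def indicator_def)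
        also have "\<dots> = indicator (Be (E0 w)) w * J (E0 w) w" using finN e0 by simp
        also have "\<dots> = indicator B w * I w"
          using S w by (auto simp: J_def Se_def U_def indicator_def Be_def C(2) I_def)
        finally show ?thesis by simp
      qed
      have step: "(\<integral>w. indicator (Be e) w * J e w * Yr j w \<partial>M) = (\<integral>w. indicator (Be e) w * J e w * g w \<partial>M)" for e
      proof -
        have ci: "AE x in M. real_cond_exp M F (\<lambda>x. J e x * Yr j x) x = real_cond_exp M F (J e) x * g x"
        proof -
          have "AE x in M. True \<longrightarrow> real_cond_exp M F (\<lambda>x. indicator (Se e) (U i j x) * indicator {True} (Y0 j x)) x
               = real_cond_exp M F (\<lambda>x. indicator (Se e) (U i j x)) x * real_cond_exp M F (\<lambda>x. indicator {True} (Y0 j x)) x"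
            using unconf[OF ij] unfolding cond_indep_def cond_indep_on_def U_def by blast
          moreover have "indicator {True} (Y0 j x) = Yr j x" for x
            by (auto simp: Yr_def indicator_def)
          ultimately show ?thesis by (simp add: J_def[abs_def] g_def)
        qed
        have Ji: "integrable M (\<lambda>x. J e x * Yr j x)"
          by (rule bnd_int[OF borel_measurable_times[OF JM Yr_meas[OF ij(2)]]]) (auto simp: Yr_def J_def indicator_def)
        have "(\<integral>w. indicator (Be e) w * J e w * Yr j w \<partial>M) = (\<integral>w. indicator (Be e) w * (J e w * Yr j w) \<partial>M)"
          by (simp add: mult.assoc)
        also have "\<dots> = (\<integral>w. indicator (Be e) w * real_cond_exp M F (\<lambda>x. J e x * Yr j x) w \<partial>M)"
          by (rule SF.real_cond_exp_intg(2)[symmetric])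
             (use BeF BeM Ji JM Yr_meas[OF ij(2)] integrable_mult_indicator[OF BeM Ji] in auto)
        also have "\<dots> = (\<integral>w. (indicator (Be e) w * g w) * real_cond_exp M F (J e) w \<partial>M)"
          by (rule Bochner_Integration.integral_cong_AE) (use ci gM BeM in \<open>auto elim!: eventually_mono\<close>)
        also have "\<dots> = (\<integral>w. (indicator (Be e) w * g w) * J e w \<partial>M)"
        proof (rule SF.real_cond_exp_intg(2))
          show "integrable M (\<lambda>x. indicator (Be e) x * g x * J e x)"
            by (rule Bochner_Integration.integrable_bound[OF g_int borel_measurable_times[OF borel_measurable_times[OF borel_measurable_indicator[OF BeM] gM] JM]], intro AE_I2) (auto simp: J_def indicator_def)
          show "(\<lambda>x. indicator (Be e) x * g x) \<in> borel_measurable F" using BeF gF by measurable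
          show "J e \<in> borel_measurable M" by (rule JM)
        qed
        finally show ?thesis by (simp add: ac_simps)
      qed
      have int1: "integrable M (\<lambda>w. indicator (Be e) w * J e w * Yr j w)" for e
        by (rule bnd_int[OF borel_measurable_times[OF borel_measurable_times[OF borel_measurable_indicator[OF BeM] JM] Yr_meas[OF ij(2)]]]) (auto simp: Yr_def J_def indicator_def)
      have int2: "integrable M (\<lambda>w. indicator (Be e) w * J e w * g w)" for e
        by (rule Bochner_Integration.integrable_bound[OF g_int borel_measurable_times[OF borel_measurable_times[OF borel_measurable_indicator[OF BeM] JM] gM]], intro AE_I2) (auto simp: J_def indicator_def)
      have "(LINT x:B|M. Yr j x * I x) = (\<integral>x. indicator B x * I x * Yr j x \<partial>M)"
        by (simp add: set_lebesgue_integral_def ac_simps)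
      also have "\<dots> = (\<integral>x. (\<Sum>e\<in>Pow (N \<times> N). indicator (Be e) x * J e x * Yr j x) \<partial>M)"
        by (rule Bochner_Integration.integral_cong) (auto simp: decomp sum_distrib_right)
      also have "\<dots> = (\<Sum>e\<in>Pow (N \<times> N). (\<integral>x. indicator (Be e) x * J e x * Yr j x \<partial>M))"
        by (rule Bochner_Integration.integral_sum) (rule int1)
      also have "\<dots> = (\<Sum>e\<in>Pow (N \<times> N). (\<integral>x. indicator (Be e) x * J e x * g x \<partial>M))"
        by (simp add: step)
      also have "\<dots> = (\<integral>x. (\<Sum>e\<in>Pow (N \<times> N). indicator (Be e) x * J e x * g x) \<partial>M)"
        by (rule Bochner_Integration.integral_sum[symmetric]) (rule int2)
      also have "\<dots> = (\<integral>x. (indicator B x * g x) * I x \<partial>M)"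
      proof (rule Bochner_Integration.integral_cong)
        fix x assume x: "x \<in> space M"
        have "(\<Sum>e\<in>Pow (N \<times> N). indicator (Be e) x * J e x * g x) = (\<Sum>e\<in>Pow (N \<times> N). indicator (Be e) x * J e x) * g x"
          by (simp add: sum_distrib_right)
        then show "(\<Sum>e\<in>Pow (N \<times> N). indicator (Be e) x * J e x * g x) = (indicator B x * g x) * I x"
          using decomp[OF x] by simp
      qed simp
      also have "\<dots> = (\<integral>x. (indicator B x * g x) * real_cond_exp M F0 I x \<partial>M)"
      proof (rule SF0.real_cond_exp_intg(2)[symmetric])
        have BM: "B \<in> sets M" using B subF0 unfolding subalgebra_def by auto
        show "integrable M (\<lambda>x. indicator B x * g x * I x)"
          by (rule Bochner_Integration.integrable_bound[OF g_int borel_measurable_times[OF borel_measurable_times[OF borel_measurable_indicator[OF BM] gM] IM]], intro AE_I2) (auto simp: I_def indicator_def)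
        show "(\<lambda>x. indicator B x * g x) \<in> borel_measurable F0" using B gF0 by measurable
        show "I \<in> borel_measurable M" by (rule IM)
      qed
      also have "\<dots> = (LINT x:B|M. g x * real_cond_exp M F0 I x)"
        by (simp add: set_lebesgue_integral_def ac_simps)
      finally show "(LINT x:B|M. Yr j x * I x) = (LINT x:B|M. g x * real_cond_exp M F0 I x)" .
    qed
  qed
  define T where "T i j d x = (of_bool (Ystar i j d x) :: real)" for i j d x
  define a where "a i j x = (of_bool ((i, j) \<in> E0 x) :: real)" for i j x
  have Yr_eq: "Yr j = (\<lambda>x. of_bool (Y0 j x))" for j by (simp add: fun_eq_iff Yr_def)
  have aF0: "a i j \<in> borel_measurable F0" for i j
    using measurable_compose[OF E0_F0 borel_measurable_count_space, of "\<lambda>e. of_bool ((i, j) \<in> e)"]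
    unfolding a_def[abs_def] .
  have aM: "a i j \<in> borel_measurable M" for i j using measurable_from_subalg[OF subF0 aF0] .
  have TM: "T i j d \<in> borel_measurable M" if "i \<in> N" "j \<in> N" for i j d
    using measurable_compose[OF Ystar_meas[OF that] borel_measurable_count_space, of "of_bool"] unfolding T_def[abs_def] .
  have Yr_int: "integrable M (Yr j)" if "j \<in> N" for j using Yr_meas[OF that] by (intro bnd_int) (auto simp: Yr_def)
  have a_int: "integrable M (a i j)" for i j using aM by (intro bnd_int) (auto simp: a_def)
  have T_int: "integrable M (T i j d)" if "i \<in> N" "j \<in> N" for i j d using TM[OF that] by (intro bnd_int) (auto simp: T_def)
  have YT_int: "integrable M (\<lambda>x. Yr j x * T i j d x)" if "i \<in> N" "j \<in> N" for i j d
    by (rule bnd_int[OF borel_measurable_times[OF Yr_meas[OF that(2)] TM[OF that]]]) (auto simp: T_def Yr_def)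
  have factA: "AE w in M. (i, j) \<in> E0 w \<longrightarrow> real_cond_exp M F0 (Yr j) w = real_cond_exp M F (Yr j) w"
    if ij: "i \<in> N" "j \<in> N" for i j
  proof -
    have e1: "(indicator (range Some) (U i j x) :: real) = a i j x" for x
      by (auto simp: U_def a_def indicator_def)
    have k: "AE w in M. real_cond_exp M F0 (\<lambda>x. Yr j x * a i j x) w = real_cond_exp M F (Yr j) w * real_cond_exp M F0 (a i j) w"
      using key[OF ij, of "range Some"] by (simp only: e1)
    have m1: "AE w in M. real_cond_exp M F0 (\<lambda>x. a i j x * Yr j x) w = a i j w * real_cond_exp M F0 (Yr j) w"
      by (rule SF0.real_cond_exp_mult[OF aF0 Yr_meas[OF ij(2)] bnd_int[OF borel_measurable_times[OF aM Yr_meas[OF ij(2)]]]]) (auto simp: a_def Yr_def)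
    have m2: "AE w in M. real_cond_exp M F0 (a i j) w = a i j w"
      by (rule SF0.real_cond_exp_F_meas) (use a_int aF0 in auto)
    from k m1 m2 show ?thesis by eventually_elim (auto simp: a_def mult.commute)
  qed
  have factB: "AE w in M. (i, j) \<in> E0 w \<longrightarrow>
      real_cond_exp M F0 (\<lambda>x. Yr j x * T i j d x) w = real_cond_exp M F0 (Yr j) w * real_cond_exp M F0 (T i j d) w"
    if ij: "i \<in> N" "j \<in> N" for i j d
  proof -
    define Sd where "Sd = {u. \<exists>a b (e::('a \<times> 'a) set). u = Some (a, b, e) \<and> (if d then a else b)}"
    have e1: "(indicator Sd (U i j x) :: real) = a i j x * T i j d x" for x
      by (auto simp: U_def a_def indicator_def Sd_def T_def)
    have SdS: "Sd \<subseteq> range Some" by (auto simp: Sd_def)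
    have e2: "Yr j x * (a i j x * T i j d x) = a i j x * (Yr j x * T i j d x)" for x
      by (simp add: ac_simps)
    have k: "AE w in M. real_cond_exp M F0 (\<lambda>x. a i j x * (Yr j x * T i j d x)) w
        = real_cond_exp M F (Yr j) w * real_cond_exp M F0 (\<lambda>x. a i j x * T i j d x) w"
      using key[OF ij SdS] by (simp only: e1 e2)
    have m1: "AE w in M. real_cond_exp M F0 (\<lambda>x. a i j x * (Yr j x * T i j d x)) w = a i j w * real_cond_exp M F0 (\<lambda>x. Yr j x * T i j d x) w"
      by (rule SF0.real_cond_exp_mult[OF aF0 borel_measurable_times[OF Yr_meas[OF ij(2)] TM[OF ij]] bnd_int[OF borel_measurable_times[OF aM borel_measurable_times[OF Yr_meas[OF ij(2)] TM[OF ij]]]]]) (auto simp: a_def Yr_def T_def)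
    have m2: "AE w in M. real_cond_exp M F0 (\<lambda>x. a i j x * T i j d x) w = a i j w * real_cond_exp M F0 (T i j d) w"
      by (rule SF0.real_cond_exp_mult[OF aF0 TM[OF ij] bnd_int[OF borel_measurable_times[OF aM TM[OF ij]]]]) (auto simp: a_def T_def)
    from k m1 m2 factA[OF ij] show ?thesis by eventually_elim (auto simp: a_def)
  qed
  have T_eq: "T i j d = (\<lambda>x. of_bool (Ystar i j d x))" for i j d by (simp add: fun_eq_iff T_def)
  have Y1M: "(\<lambda>x. of_bool (Y1 i x) :: real) \<in> borel_measurable M" if "i \<in> N" for i
    using measurable_compose[OF Y1_meas[OF that] borel_measurable_count_space, of "of_bool"] .
  have stepA: "AE w in M. (i, j) \<in> E0 w \<longrightarrow>
      cond_cov M F0 (\<lambda>x. of_bool (Y1 i x)) (\<lambda>x. of_bool (Y0 j x)) w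
      = mu j w * (1 - mu j w) * real_cond_exp M F0 (\<lambda>x. of_bool (Ystar i j True x) - of_bool (Ystar i j False x)) w"
    if ij: "i \<in> N" "j \<in> N" for i j
  proof -
    have rt: "Y1 i x = rho i ((\<lambda>k. Y0 k x)(j := True)) x" if "x \<in> space M" "Y0 j x" for x
    proof -
      have "(\<lambda>k. Y0 k x)(j := True) = (\<lambda>k. Y0 k x)" using that(2) by (auto simp: fun_eq_iff)
      then show ?thesis using Y1_rho[OF ij(1) that(1)] by simp
    qed
    have rf: "Y1 i x = rho i ((\<lambda>k. Y0 k x)(j := False)) x" if "x \<in> space M" "\<not> Y0 j x" for x
    proof -
      have "(\<lambda>k. Y0 k x)(j := False) = (\<lambda>k. Y0 k x)" using that(2) by (auto simp: fun_eq_iff)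
      then show ?thesis using Y1_rho[OF ij(1) that(1)] by simp
    qed
    have p1: "(of_bool (Y1 i x) :: real) * of_bool (Y0 j x) = Yr j x * T i j True x" if "x \<in> space M" for x
      using rt[OF that] by (cases "Y0 j x") (auto simp: Yr_def T_def Ystar_def pot_out_def)
    have p2: "(of_bool (Y1 i x) :: real) = Yr j x * T i j True x + (T i j False x - Yr j x * T i j False x)" if "x \<in> space M" for x
      using rt[OF that] rf[OF that] by (cases "Y0 j x") (auto simp: Yr_def T_def Ystar_def pot_out_def)
    have YM: "(\<lambda>x. of_bool (Y0 j x) :: real) \<in> borel_measurable M" using Yr_meas[OF ij(2)] by (simp add: Yr_eq)
    have YT1M: "(\<lambda>x. Yr j x * T i j True x) \<in> borel_measurable M"
      using Yr_meas[OF ij(2)] TM[OF ij] by (rule borel_measurable_times)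
    have YT0M: "(\<lambda>x. Yr j x * T i j False x) \<in> borel_measurable M"
      using Yr_meas[OF ij(2)] TM[OF ij] by (rule borel_measurable_times)
    have c1: "AE w in M. real_cond_exp M F0 (\<lambda>x. of_bool (Y1 i x) * of_bool (Y0 j x)) w = real_cond_exp M F0 (\<lambda>x. Yr j x * T i j True x) w"
      by (rule SF0.real_cond_exp_cong[OF AE_I2[OF p1] borel_measurable_times[OF Y1M[OF ij(1)] YM] YT1M])
    have c2: "AE w in M. real_cond_exp M F0 (\<lambda>x. of_bool (Y1 i x)) w = real_cond_exp M F0 (\<lambda>x. Yr j x * T i j True x + (T i j False x - Yr j x * T i j False x)) w"
      by (rule SF0.real_cond_exp_cong[OF AE_I2[OF p2] Y1M[OF ij(1)] borel_measurable_add[OF YT1M borel_measurable_diff[OF TM[OF ij] YT0M]]])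
    have c3: "AE w in M. real_cond_exp M F0 (\<lambda>x. Yr j x * T i j True x + (T i j False x - Yr j x * T i j False x)) w
        = real_cond_exp M F0 (\<lambda>x. Yr j x * T i j True x) w + real_cond_exp M F0 (\<lambda>x. T i j False x - Yr j x * T i j False x) w"
      by (rule SF0.real_cond_exp_add[OF YT_int[OF ij] Bochner_Integration.integrable_diff[OF T_int[OF ij] YT_int[OF ij]]])
    have c4: "AE w in M. real_cond_exp M F0 (\<lambda>x. T i j False x - Yr j x * T i j False x) w
        = real_cond_exp M F0 (T i j False) w - real_cond_exp M F0 (\<lambda>x. Yr j x * T i j False x) w"
      by (rule SF0.real_cond_exp_diff[OF T_int[OF ij] YT_int[OF ij]])
    have c5: "AE w in M. real_cond_exp M F0 (\<lambda>x. T i j True x - T i j False x) w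
        = real_cond_exp M F0 (T i j True) w - real_cond_exp M F0 (T i j False) w"
      by (rule SF0.real_cond_exp_diff[OF T_int[OF ij] T_int[OF ij]])
    from factB[OF ij, of True] factB[OF ij, of False] c1 c2 c3 c4 c5
    show ?thesis
    proof eventually_elim
      case (elim w)
      show ?case
      proof
        assume e: "(i, j) \<in> E0 w"
        define m where "m = real_cond_exp M F0 (Yr j) w"
        define t1 where "t1 = real_cond_exp M F0 (T i j True) w"
        define t0 where "t0 = real_cond_exp M F0 (T i j False) w"
        have cc: "cond_cov M F0 (\<lambda>x. of_bool (Y1 i x)) (\<lambda>x. of_bool (Y0 j x)) w = m * t1 - (m * t1 + (t0 - m * t0)) * m"
          using elim e unfolding cond_cov_def m_def t1_def t0_def by (simp add: Yr_eq)
        have dd: "real_cond_exp M F0 (\<lambda>x. of_bool (Ystar i j True x) - of_bool (Ystar i j False x)) w = t1 - t0"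
          using elim(7) unfolding t1_def t0_def by (simp add: T_def)
        have mm: "mu j w = m" unfolding m_def mu_def by (simp add: Yr_eq)
        show "cond_cov M F0 (\<lambda>x. of_bool (Y1 i x)) (\<lambda>x. of_bool (Y0 j x)) w
          = mu j w * (1 - mu j w) * real_cond_exp M F0 (\<lambda>x. of_bool (Ystar i j True x) - of_bool (Ystar i j False x)) w"
          unfolding cc dd mm by (simp add: algebra_simps)
      qed
    qed
  qed
  have stepB: "AE w in M. (i, j) \<notin> E0 w \<longrightarrow> cond_cov M F0 (\<lambda>x. of_bool (Y1 i x)) (\<lambda>x. of_bool (Y0 j x)) w = 0"
    if ij: "i \<in> N" "j \<in> N" "i \<noteq> j" for i j
  proof -
    have "AE w in M. \<forall>e\<in>Pow (N \<times> N). (i, j) \<notin> e \<longrightarrow> E0 w = e \<longrightarrow>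
            cond_cov M F0 (\<lambda>x. of_bool (Y1 i x)) (\<lambda>x. of_bool (Y0 j x)) w = 0"
    proof (rule AE_finite_allI)
      show "finite (Pow (N \<times> N))" using finN by simp
      fix e assume "e \<in> Pow (N \<times> N)"
      show "AE w in M. (i, j) \<notin> e \<longrightarrow> E0 w = e \<longrightarrow>
            cond_cov M F0 (\<lambda>x. of_bool (Y1 i x)) (\<lambda>x. of_bool (Y0 j x)) w = 0"
      proof (cases "(i, j) \<in> e")
        case True then show ?thesis by simp
      next
        case False
        have disj: "(nbh_set_bar e {i} \<union> {}) \<inter> (nbh_set_bar e {} \<union> {j}) = {}"
          using False ij(3) by (auto simp: nbh_set_bar_def nbh_def)
        have ci: "cond_indep_on M F0 (\<lambda>w. E0 w = e)
           (\<lambda>w. (restrict (\<lambda>k. Y1 k w) {i}, restrict (\<lambda>k. Y0 k w) ({} \<union> nbh_set_bar e {i})))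
           (\<lambda>w. (restrict (\<lambda>k. Y1 k w) {}, restrict (\<lambda>k. Y0 k w) ({j} \<union> nbh_set_bar e {})))"
          using DCG[unfolded dynamic_causal_graph_def, THEN spec[of _ "{i}"], THEN spec[of _ "{}"],
              THEN spec[of _ "{}"], THEN spec[of _ "{j}"], THEN spec[of _ e]] ij disj by auto
        have r1: "indicator {p. fst p i} (restrict (\<lambda>k. Y1 k x) {i}, restrict (\<lambda>k. Y0 k x) ({} \<union> nbh_set_bar e {i}))
            = (of_bool (Y1 i x) :: real)" for x
          by (simp add: indicator_def)
        have r2: "indicator {p. snd p j} (restrict (\<lambda>k. Y1 k x) {}, restrict (\<lambda>k. Y0 k x) ({j} \<union> nbh_set_bar e {}))
            = (of_bool (Y0 j x) :: real)" for x
          by (simp add: indicator_def)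
        have "AE w in M. E0 w = e \<longrightarrow>
          real_cond_exp M F0 (\<lambda>x. indicator {p. fst p i} (restrict (\<lambda>k. Y1 k x) {i}, restrict (\<lambda>k. Y0 k x) ({} \<union> nbh_set_bar e {i}))
                                 * indicator {p. snd p j} (restrict (\<lambda>k. Y1 k x) {}, restrict (\<lambda>k. Y0 k x) ({j} \<union> nbh_set_bar e {}))) w
          = real_cond_exp M F0 (\<lambda>x. indicator {p. fst p i} (restrict (\<lambda>k. Y1 k x) {i}, restrict (\<lambda>k. Y0 k x) ({} \<union> nbh_set_bar e {i}))) w
          * real_cond_exp M F0 (\<lambda>x. indicator {p. snd p j} (restrict (\<lambda>k. Y1 k x) {}, restrict (\<lambda>k. Y0 k x) ({j} \<union> nbh_set_bar e {}))) w"
          using ci unfolding cond_indep_on_def by blast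
        then have "AE w in M. E0 w = e \<longrightarrow>
          real_cond_exp M F0 (\<lambda>x. of_bool (Y1 i x) * of_bool (Y0 j x)) w
          = real_cond_exp M F0 (\<lambda>x. of_bool (Y1 i x)) w * real_cond_exp M F0 (\<lambda>x. of_bool (Y0 j x)) w"
          by (simp only: r1 r2)
        then show ?thesis by (auto simp: cond_cov_def elim!: eventually_mono)
      qed
    qed
    with AE_space show ?thesis
    proof eventually_elim
      case (elim w)
      then have "E0 w \<in> Pow (N \<times> N)" using E0_edges by auto
      with elim show ?case by auto
    qed
  qed
  have stepC: "AE w in M. 0 \<le> (\<Sum>i\<in>{i\<in>N. (i, j) \<in> E0 w - EG w}.
        real_cond_exp M F0 (\<lambda>x. of_bool (Ystar i j True x) - of_bool (Ystar i j False x)) w)"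
    if j: "j \<in> N" for j
  proof -
    define bG where "bG i x = (of_bool ((i, j) \<in> EG x) :: real)" for i x
    have bGF0: "bG i \<in> borel_measurable F0" for i
      using measurable_compose[OF EG_F0 borel_measurable_count_space, of "\<lambda>e. of_bool ((i, j) \<in> e)"]
      unfolding bG_def[abs_def] .
    define f where "f i x = a i j x * (1 - bG i x)" for i x
    have fF0: "f i \<in> borel_measurable F0" for i
      unfolding f_def[abs_def] using aF0 bGF0 by measurable
    have fM: "f i \<in> borel_measurable M" for i using measurable_from_subalg[OF subF0 fF0] .
    define Dl where "Dl i x = (if i \<in> N then T i j True x - T i j False x else 0)" for i x
    have DlM: "Dl i \<in> borel_measurable M" for i
    proof (cases "i \<in> N")
      case True
      then have "Dl i = (\<lambda>x. T i j True x - T i j False x)" by (simp add: fun_eq_iff Dl_def)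
      then show ?thesis using TM[OF True j] by simp
    next
      case False
      then have "Dl i = (\<lambda>x. 0)" by (simp add: fun_eq_iff Dl_def)
      then show ?thesis by simp
    qed
    have q_int: "integrable M (\<lambda>x. f i x * Dl i x)" for i
      by (rule bnd_int[OF borel_measurable_times[OF fM DlM]])
         (auto simp: f_def a_def bG_def Dl_def T_def)
    have sumeq: "(\<Sum>i\<in>{i\<in>N. (i, j) \<in> E0 x - EG x}. h i) = (\<Sum>i\<in>N. f i x * h i)" for x and h :: "'a \<Rightarrow> real"
      using finN by (simp add: sum.inter_filter f_def a_def bG_def) (intro sum.cong refl; auto)
    have Q_pos: "AE x in M. 0 \<le> (\<Sum>i\<in>N. f i x * Dl i x)"
    proof -
      have "(\<Sum>i\<in>N. f i x * Dl i x) = (\<Sum>i\<in>N. f i x * (of_bool (Ystar i j True x) - of_bool (Ystar i j False x)))" for x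
        by (intro sum.cong refl) (simp add: Dl_def T_def)
      then show ?thesis using nonneg_spill[OF j, unfolded sumeq] by (simp only:)
    qed
    have c1: "AE x in M. 0 \<le> real_cond_exp M F0 (\<lambda>x. \<Sum>i\<in>N. f i x * Dl i x) x"
      by (rule SF0.real_cond_exp_pos[OF Q_pos]) (use fM DlM in measurable)
    have c2: "AE x in M. real_cond_exp M F0 (\<lambda>x. \<Sum>i\<in>N. f i x * Dl i x) x = (\<Sum>i\<in>N. real_cond_exp M F0 (\<lambda>x. f i x * Dl i x) x)"
      by (rule SF0.real_cond_exp_sum) (rule q_int)
    have c3: "AE x in M. \<forall>i\<in>N. real_cond_exp M F0 (\<lambda>x. f i x * Dl i x) x
        = f i x * real_cond_exp M F0 (\<lambda>x. of_bool (Ystar i j True x) - of_bool (Ystar i j False x)) x"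
    proof (rule AE_finite_allI[OF finN])
      fix i assume i: "i \<in> N"
      have "(\<lambda>x. of_bool (Ystar i j True x) - of_bool (Ystar i j False x) :: real) = Dl i"
        using i by (simp add: fun_eq_iff Dl_def T_def)
      then show "AE x in M. real_cond_exp M F0 (\<lambda>x. f i x * Dl i x) x
        = f i x * real_cond_exp M F0 (\<lambda>x. of_bool (Ystar i j True x) - of_bool (Ystar i j False x)) x"
        using SF0.real_cond_exp_mult[OF fF0 DlM q_int] by simp
    qed
    from c1 c2 c3 show ?thesis
    proof eventually_elim
      case (elim w)
      show ?case unfolding sumeq using elim by simp
    qed
  qed
  have mu_bnd: "AE w in M. 0 \<le> mu j w \<and> mu j w \<le> 1" if j: "j \<in> N" for j
  proof -
    have "AE w in M. 0 \<le> real_cond_exp M F0 (Yr j) w"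
      by (rule SF0.real_cond_exp_ge_c[OF Yr_int[OF j]]) (simp add: Yr_def)
    moreover have "AE w in M. real_cond_exp M F0 (Yr j) w \<le> 1"
      by (rule SF0.real_cond_exp_le_c[OF Yr_int[OF j]]) (simp add: Yr_def)
    ultimately show ?thesis by eventually_elim (simp add: mu_def Yr_eq)
  qed
  have AA: "AE w in M. \<forall>i\<in>N. \<forall>j\<in>N. (i, j) \<in> E0 w \<longrightarrow>
      cond_cov M F0 (\<lambda>x. of_bool (Y1 i x)) (\<lambda>x. of_bool (Y0 j x)) w
      = mu j w * (1 - mu j w) * real_cond_exp M F0 (\<lambda>x. of_bool (Ystar i j True x) - of_bool (Ystar i j False x)) w"
    by (intro AE_finite_allI[OF finN] stepA)
  have BB: "AE w in M. \<forall>i\<in>N. \<forall>j\<in>N. i \<noteq> j \<longrightarrow> (i, j) \<notin> E0 w \<longrightarrow>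
      cond_cov M F0 (\<lambda>x. of_bool (Y1 i x)) (\<lambda>x. of_bool (Y0 j x)) w = 0"
    by (intro AE_finite_allI[OF finN]) (auto intro: stepB elim!: eventually_mono)
  have CC: "AE w in M. \<forall>j\<in>N. 0 \<le> (\<Sum>i\<in>{i\<in>N. (i, j) \<in> E0 w - EG w}.
        real_cond_exp M F0 (\<lambda>x. of_bool (Ystar i j True x) - of_bool (Ystar i j False x)) w)"
    by (intro AE_finite_allI[OF finN] stepC)
  have MM: "AE w in M. \<forall>j\<in>N. 0 \<le> mu j w \<and> mu j w \<le> 1"
    by (intro AE_finite_allI[OF finN] mu_bnd)
  from AA BB CC MM v2_pos AE_space show ?thesis
  proof eventually_elim
    case (elim w)
    define m where "m j = mu j w * (1 - mu j w)" for j
    define d where "d i j = real_cond_exp M F0 (\<lambda>x. of_bool (Ystar i j True x) - of_bool (Ystar i j False x)) w" for i j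
    define c where "c i j = cond_cov M F0 (\<lambda>x. of_bool (Y1 i x)) (\<lambda>x. of_bool (Y0 j x)) w" for i j
    have v2eq: "v2 w = (1 / real (card N)) * (\<Sum>l\<in>N. m l)" unfolding v2_def m_def ..
    have Spos: "(\<Sum>l\<in>N. m l) > 0"
    proof (rule ccontr)
      assume "\<not> (\<Sum>l\<in>N. m l) > 0"
      then have "(1 / real (card N)) * (\<Sum>l\<in>N. m l) \<le> 0" by (intro mult_nonneg_nonpos) auto
      with elim(5) v2eq show False by simp
    qed
    have cardpos: "card N > 0"
    proof (rule ccontr)
      assume "\<not> card N > 0"
      then have "v2 w = 0" using v2eq by simp
      with elim(5) show False by simp
    qed
    have nv: "real (card N) * v2 w = (\<Sum>l\<in>N. m l)" using cardpos v2eq by simp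
    have E0s: "(i, j) \<in> EG w \<Longrightarrow> i \<noteq> j" for i j using EG_edges[OF elim(6)] by auto
    have hc: "c i j = (if (i, j) \<in> E0 w then m j * d i j else 0)" if "i \<in> N" "j \<in> N" "(i, j) \<in> EG w" for i j
      using elim(1,2) that E0s[OF that(3)] unfolding c_def m_def d_def by auto
    have "(1 / (\<Sum>l\<in>N. m l)) * (\<Sum>i\<in>N. \<Sum>j\<in>{j\<in>N. (i, j) \<in> EG w}. c i j)
       \<le> (\<Sum>j\<in>N. m j / (\<Sum>l\<in>N. m l) * (\<Sum>i\<in>{i\<in>N. (i, j) \<in> E0 w}. d i j))"
      by (rule alg_final[OF finN Spos hc]) (use elim(3,4) in \<open>auto simp: m_def d_def\<close>)
    then show ?case unfolding CG_def D_def wt_def tau_def nv m_def d_def c_def by simp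
  qed
qed
end
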